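(* Let $\mathcal V$ be a complex topological vector space and $\mathcal D\subseteq\mathcal V_{\rm nc}$ a noncommutative set satisfying (P1) each $\mathcal D_n$ is open in $\mathcal V^{n\times n}$, (P2) $UaU^*\in\mathcal D_n$ for $a\in\mathcal D_n$ and unitary $U\in\mathbb C^{n\times n}$, and (P3) if $\begin{bmatrix}a&0\\0&c\end{bmatrix}\in\mathcal D_{n+m}$ then $a\in\mathcal D_n,c\in\mathcal D_m$. If $n\in\mathbb N$ and $A\subseteq\mathcal D_n$ is open in the topology generated by the pseudodistance $\tilde d_{\mathcal D}$, then $A$ is open in the product topology induced by $\mathcal V$ on $\mathcal V^{n\times n}$.
   Context: A noncommutative set is a family $\mathcal D=(\mathcal D_n)$, $\mathcal D_n\subseteq\mathcal V^{n\times n}$, closed under direct sums. For $a\in\mathcal D_n,c\in\mathcal D_m,b\in\mathcal V^{n\times m}$, $\delta_{\mathcal D}(a,c)(b)=\big[\sup\{t\in[0,+\infty]\colon\begin{bmatrix}a&sb\\0&c\end{bmatrix}\in\mathcal D_{n+m}\ \forall s\in[0,t]\}\big]^{-1}$ ($1/0=+\infty,1/\infty=0$), $\tilde\delta_{\mathcal D}(a,c)=\delta_{\mathcal D}(a,c)(a-c)$ for $a,c\in\mathcal D_n$, and $\tilde d_{\mathcal D}(a,c)=\inf\{\sum_{j=1}^N\tilde\delta_{\mathcal D}(a_{j-1},a_j)\colon N\in\mathbb N,\ a_0=a,a_N=c,\ a_j\in\mathcal D_n\}$. *)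

theory Defs
  imports "HOL-Analysis.Analysis" "HOL-Library.Extended_Nonnegative_Real"
begin

text \<open>Square/rectangular matrices over V are represented as functions nat => nat => 'v,
  with entries outside the index range equal to zero.  The complex vector space
  structure of V is given by a scalar multiplication 'scl'.\<close>

type_synonym 'v ncmat = "nat \<Rightarrow> nat \<Rightarrow> 'v"

definition mat_carrier :: "nat \<Rightarrow> nat \<Rightarrow> ('v::zero) ncmat set" where
  "mat_carrier n m = {M. \<forall>i j. \<not> (i < n \<and> j < m) \<longrightarrow> M i j = 0}"

text \<open>Block upper triangular matrix [[a, b],[0, c]] with a of size n, c of size m.\<close>
definition block_ut :: "nat \<Rightarrow> nat \<Rightarrow> ('v::zero) ncmat \<Rightarrow> 'v ncmat \<Rightarrow> 'v ncmat \<Rightarrow> 'v ncmat" where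
  "block_ut n m a b c = (\<lambda>i j.
     if i < n \<and> j < n then a i j
     else if i < n \<and> n \<le> j \<and> j < n + m then b i (j - n)
     else if n \<le> i \<and> i < n + m \<and> n \<le> j \<and> j < n + m then c (i - n) (j - n)
     else 0)"

definition nc_dsum :: "nat \<Rightarrow> nat \<Rightarrow> ('v::zero) ncmat \<Rightarrow> 'v ncmat \<Rightarrow> 'v ncmat" where
  "nc_dsum n m a c = block_ut n m a (\<lambda>_ _. 0) c"

definition nc_set :: "(nat \<Rightarrow> ('v::zero) ncmat set) \<Rightarrow> bool" where
  "nc_set D \<longleftrightarrow> (\<forall>n. D n \<subseteq> mat_carrier n n) \<and>
     (\<forall>n m a c. a \<in> D n \<longrightarrow> c \<in> D m \<longrightarrow> nc_dsum n m a c \<in> D (n + m))"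

definition mat_open :: "nat \<Rightarrow> ('v::{zero,topological_space}) ncmat set \<Rightarrow> bool" where
  "mat_open n S \<longleftrightarrow> S \<subseteq> mat_carrier n n \<and>
     (\<forall>M\<in>S. \<exists>W :: nat \<Rightarrow> nat \<Rightarrow> 'v set.
        (\<forall>i<n. \<forall>j<n. open (W i j) \<and> M i j \<in> W i j) \<and>
        (\<forall>N\<in>mat_carrier n n. (\<forall>i<n. \<forall>j<n. N i j \<in> W i j) \<longrightarrow> N \<in> S))"

definition unitary_mat :: "nat \<Rightarrow> (nat \<Rightarrow> nat \<Rightarrow> complex) \<Rightarrow> bool" where
  "unitary_mat n U \<longleftrightarrow> (\<forall>i<n. \<forall>j<n.
      (\<Sum>k<n. U i k * cnj (U j k)) = (if i = j then 1 else 0))"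

definition unitary_conj :: "(complex \<Rightarrow> 'v \<Rightarrow> 'v) \<Rightarrow> nat \<Rightarrow> (nat \<Rightarrow> nat \<Rightarrow> complex)
     \<Rightarrow> ('v::comm_monoid_add) ncmat \<Rightarrow> 'v ncmat" where
  "unitary_conj scl n U a = (\<lambda>i j. if i < n \<and> j < n then
      (\<Sum>k<n. \<Sum>l<n. scl (U i k * cnj (U j l)) (a k l)) else 0)"

text \<open>delta_D(a,c)(b) = [sup {t in [0,inf] : [[a, s b],[0, c]] in D_{n+m} for all s in [0,t]}]^{-1},
  with 1/0 = inf, 1/inf = 0 (ennreal inverse has exactly these conventions).\<close>
definition nc_delta :: "(complex \<Rightarrow> 'v \<Rightarrow> 'v) \<Rightarrow> (nat \<Rightarrow> ('v::zero) ncmat set)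
     \<Rightarrow> nat \<Rightarrow> nat \<Rightarrow> 'v ncmat \<Rightarrow> 'v ncmat \<Rightarrow> 'v ncmat \<Rightarrow> ennreal" where
  "nc_delta scl D n m a c b = inverse (Sup {t :: ennreal.
      \<forall>s::real. 0 \<le> s \<longrightarrow> ennreal s \<le> t \<longrightarrow>
        block_ut n m a (\<lambda>i j. scl (complex_of_real s) (b i j)) c \<in> D (n + m)})"

definition nc_delta_tilde :: "(complex \<Rightarrow> 'v \<Rightarrow> 'v) \<Rightarrow> (nat \<Rightarrow> ('v::ab_group_add) ncmat set)
     \<Rightarrow> nat \<Rightarrow> 'v ncmat \<Rightarrow> 'v ncmat \<Rightarrow> ennreal" where
  "nc_delta_tilde scl D n a c = nc_delta scl D n n a c (\<lambda>i j. a i j - c i j)"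

definition nc_dist_tilde :: "(complex \<Rightarrow> 'v \<Rightarrow> 'v) \<Rightarrow> (nat \<Rightarrow> ('v::ab_group_add) ncmat set)
     \<Rightarrow> nat \<Rightarrow> 'v ncmat \<Rightarrow> 'v ncmat \<Rightarrow> ennreal" where
  "nc_dist_tilde scl D n a c = Inf {(\<Sum>j\<in>{1..N}. nc_delta_tilde scl D n (x (j - 1)) (x j)) | N (x :: nat \<Rightarrow> 'v ncmat).
      N \<ge> 1 \<and> x 0 = a \<and> x N = c \<and> (\<forall>j\<le>N. x j \<in> D n)}"

definition dtilde_open :: "(complex \<Rightarrow> 'v \<Rightarrow> 'v) \<Rightarrow> (nat \<Rightarrow> ('v::ab_group_add) ncmat set)
     \<Rightarrow> nat \<Rightarrow> 'v ncmat set \<Rightarrow> bool" where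
  "dtilde_open scl D n A \<longleftrightarrow> A \<subseteq> D n \<and>
     (\<forall>a\<in>A. \<exists>\<epsilon>>0. {c \<in> D n. nc_dist_tilde scl D n a c < \<epsilon>} \<subseteq> A)"

end

theory Submission
  imports Defs
begin

lemma cont_scl_c:
  assumes "continuous_on UNIV (\<lambda>(c::complex, x::'v::topological_space). scl c x)"
  shows "continuous_on UNIV (\<lambda>x. scl c x)"
proof -
  have "continuous_on UNIV ((\<lambda>(c::complex, x::'v). scl c x) \<circ> (\<lambda>x. (c, x)))"
    by (rule continuous_on_compose[OF continuous_on_Pair[OF continuous_on_const continuous_on_id]])
      (rule continuous_on_subset[OF assms], simp)
  then show ?thesis by (simp add: o_def)
qed

lemma cont_add_c:
  fixes a :: "'v::{plus,topological_space}"
  assumes "continuous_on UNIV (\<lambda>(x::'v, y::'v). x + y)"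
  shows "continuous_on UNIV (\<lambda>x. a + x)"
proof -
  have "continuous_on UNIV ((\<lambda>(x::'v, y::'v). x + y) \<circ> (\<lambda>x. (a, x)))"
    by (rule continuous_on_compose[OF continuous_on_Pair[OF continuous_on_const continuous_on_id]])
      (rule continuous_on_subset[OF assms], simp)
  then show ?thesis by (simp add: o_def)
qed

lemma open_pre: "continuous_on UNIV f \<Longrightarrow> open B \<Longrightarrow> open (f -` B)"
  using continuous_on_open_vimage[of UNIV f] by auto

lemma open_minus_pre:
  fixes scl :: "complex \<Rightarrow> 'v::{ab_group_add, topological_space} \<Rightarrow> 'v"
  assumes vs: "vector_space scl"
    and add_cont: "continuous_on UNIV (\<lambda>(x::'v, y::'v). x + y)"
    and scl_cont: "continuous_on UNIV (\<lambda>(c::complex, x::'v). scl c x)"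
    and "open U"
  shows "open {x. (a::'v) - x \<in> U}"
proof -
  have eq: "(\<lambda>x. a - x) = (\<lambda>y. a + y) \<circ> (\<lambda>x. scl (-1) x)"
    using module.scale_minus_left[OF vs[folded module_iff_vector_space], of 1] module.scale_one[OF vs[folded module_iff_vector_space]] by (auto simp: fun_eq_iff)
  have "continuous_on UNIV (\<lambda>x. a - x)" unfolding eq
    by (rule continuous_on_compose[OF cont_scl_c[OF scl_cont]]) (rule continuous_on_subset[OF cont_add_c[OF add_cont]], simp)
  from open_pre[OF this assms(4)] show ?thesis by (simp add: vimage_def)
qed

lemma small_scale:
  fixes scl :: "complex \<Rightarrow> 'v::{ab_group_add, topological_space} \<Rightarrow> 'v"
  assumes vs: "vector_space scl"
    and scl_cont: "continuous_on UNIV (\<lambda>(c::complex, x::'v). scl c x)"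
    and W: "open W" "0 \<in> W" and T: "T \<ge> 0"
  shows "\<exists>U. open U \<and> 0 \<in> U \<and> (\<forall>x\<in>U. \<forall>s. 0 \<le> s \<longrightarrow> s \<le> T \<longrightarrow> scl (complex_of_real s) x \<in> W)"
proof -
  let ?f = "\<lambda>(c::complex, x::'v). scl c x"
  have o: "open (?f -` W)" by (rule open_pre[OF scl_cont W(1)])
  have "(0, 0) \<in> ?f -` W" using module.scale_zero_left[OF vs[folded module_iff_vector_space]] W(2) by simp
  from open_prod_elim[OF o this] obtain B C where BC: "open B" "open C" "(0,0) \<in> B \<times> C" "B \<times> C \<subseteq> ?f -` W"
    by blast
  from BC obtain r where r: "r > 0" "ball 0 r \<subseteq> B" using open_contains_ball by blast
  define K where "K = (T + 1) / r"
  have K: "K > 0" using r T by (simp add: K_def)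
  define U where "U = (\<lambda>x. scl (complex_of_real K) x) -` C"
  have "open U" unfolding U_def by (rule open_pre[OF cont_scl_c[OF scl_cont] BC(2)])
  moreover have "0 \<in> U" using BC module.scale_zero_right[OF vs[folded module_iff_vector_space]] by (simp add: U_def)
  moreover have "scl (complex_of_real s) x \<in> W" if "x \<in> U" "0 \<le> s" "s \<le> T" for x s
  proof -
    have "r * s \<le> r * T" using that r by (intro mult_left_mono) auto
    then have h0: "r * s < r + r * T" using r by linarith
    then have h: "r * s < r + T * r" by (simp add: mult.commute)
    have "s / K < r" using h K r by (simp add: K_def field_simps)
    then have "complex_of_real (s / K) \<in> ball 0 r" using that K
      by (simp add: dist_norm norm_of_real del: of_real_divide)
    then have "complex_of_real (s / K) \<in> B" using r by blast
    moreover have "scl (complex_of_real K) x \<in> C" using that U_def by auto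
    ultimately have "scl (complex_of_real (s / K)) (scl (complex_of_real K) x) \<in> W" using BC(4) by auto
    moreover have "complex_of_real (s / K) * complex_of_real K = complex_of_real s" proof -
      have "s / K * K = s" using K by simp
      then show ?thesis by (metis of_real_mult)
    qed
    ultimately show ?thesis using module.scale_scale[OF vs[folded module_iff_vector_space]] by metis
  qed
  ultimately show ?thesis by blast
qed

lemma ennreal_inv_antimono: assumes xy: "(x::ennreal) \<le> y" shows "inverse y \<le> inverse x"
proof (cases y)
  case top
  then show ?thesis by simp
next
  case (real b)
  show ?thesis
  proof (cases x)
    case (real a)
    show ?thesis
    proof (cases "a = 0")
      case True
      then show ?thesis using \<open>x = ennreal a\<close> by simp
    next
      case False
      then have "0 < a" using real by auto
      moreover have "a \<le> b" using \<open>x = ennreal a\<close> \<open>y = ennreal b\<close> xy \<open>0 \<le> b\<close> by simp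
      ultimately show ?thesis using \<open>x = ennreal a\<close> \<open>y = ennreal b\<close>
        by (simp add: inverse_ennreal le_imp_inverse_le)
    qed
  next
    case top
    then show ?thesis using xy \<open>y = ennreal b\<close> by (simp add: top_unique)
  qed
qed

lemma ennreal_exT: "0 < (e::ennreal) \<Longrightarrow> \<exists>T>0. inverse (ennreal T) < e"
proof (cases e)
  case (real r)
  assume "0 < e"
  then have r: "r > 0" using real by auto
  have "inverse (ennreal (2 / r)) = ennreal (r / 2)" using r by (simp add: inverse_ennreal)
  also have "\<dots> < ennreal r" using r by (simp add: ennreal_less_iff)
  finally show ?thesis using r real by (intro exI[of _ "2 / r"]) simp
next
  case top
  then show ?thesis by (intro exI[of _ 1]) simp
qed

theorem proposition3p10:
  fixes scl :: "complex \<Rightarrow> 'v::{ab_group_add, topological_space} \<Rightarrow> 'v"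
    and D :: "nat \<Rightarrow> 'v ncmat set"
    and n :: nat
    and A :: "'v ncmat set"
  assumes vs: "vector_space scl"
    and add_cont: "continuous_on UNIV (\<lambda>(x::'v, y::'v). x + y)"
    and scl_cont: "continuous_on UNIV (\<lambda>(c::complex, x::'v). scl c x)"
    and ncD: "nc_set D"
    and P1: "\<And>k. mat_open k (D k)"
    and P2: "\<And>k a U. a \<in> D k \<Longrightarrow> unitary_mat k U \<Longrightarrow> unitary_conj scl k U a \<in> D k"
    and P3: "\<And>k m a c. a \<in> mat_carrier k k \<Longrightarrow> c \<in> mat_carrier m m \<Longrightarrow>
               nc_dsum k m a c \<in> D (k + m) \<Longrightarrow> a \<in> D k \<and> c \<in> D m"
    and A_open: "dtilde_open scl D n A"
  shows "mat_open n A"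
proof -
  have AD: "A \<subseteq> D n" using A_open by (simp add: dtilde_open_def)
  have Dc: "D n \<subseteq> mat_carrier n n" using P1[of n] by (simp add: mat_open_def)
  have "\<exists>W :: nat \<Rightarrow> nat \<Rightarrow> 'v set.
        (\<forall>i<n. \<forall>j<n. open (W i j) \<and> M i j \<in> W i j) \<and>
        (\<forall>N\<in>mat_carrier n n. (\<forall>i<n. \<forall>j<n. N i j \<in> W i j) \<longrightarrow> N \<in> A)" if MA: "M \<in> A" for M
  proof -
    have MD: "M \<in> D n" using MA AD by auto
    obtain \<epsilon> where eps: "\<epsilon> > 0" "{c \<in> D n. nc_dist_tilde scl D n M c < \<epsilon>} \<subseteq> A"
      using A_open MA unfolding dtilde_open_def by blast
    obtain T :: real where T: "T > 0" "inverse (ennreal T) < \<epsilon>" using ennreal_exT[OF eps(1)] by blast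
    obtain W1 where W1: "\<forall>i<n. \<forall>j<n. open (W1 i j) \<and> M i j \<in> W1 i j"
      "\<forall>N\<in>mat_carrier n n. (\<forall>i<n. \<forall>j<n. N i j \<in> W1 i j) \<longrightarrow> N \<in> D n"
      using P1[of n] MD unfolding mat_open_def by blast
    define Z where "Z = nc_dsum n n M M"
    have ZD: "Z \<in> D (n + n)" using ncD MD unfolding nc_set_def Z_def by blast
    obtain W2 where W2: "\<forall>i<n+n. \<forall>j<n+n. open (W2 i j) \<and> Z i j \<in> W2 i j"
      "\<forall>N\<in>mat_carrier (n+n) (n+n). (\<forall>i<n+n. \<forall>j<n+n. N i j \<in> W2 i j) \<longrightarrow> N \<in> D (n+n)"
      using P1[of "n+n"] ZD unfolding mat_open_def by blast
    have Z0: "Z i (n + j) = 0" "Z (n + j) i = 0" if "i < n" for i j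
      using that by (auto simp: Z_def nc_dsum_def block_ut_def)
    have ZM: "Z i j = M i j" "Z (n + i) (n + j) = M i j" if "i < n" "j < n" for i j
      using that by (auto simp: Z_def nc_dsum_def block_ut_def)
    define P where "P = (\<lambda>i j U. open U \<and> (0::'v) \<in> U \<and>
        (\<forall>x\<in>U. \<forall>s. 0 \<le> s \<longrightarrow> s \<le> T \<longrightarrow> scl (complex_of_real s) x \<in> W2 i (n + j)))"
    define U where "U = (\<lambda>i j. SOME U. P i j U)"
    have UP: "P i j (U i j)" if "i < n" "j < n" for i j
    proof -
      have "open (W2 i (n + j))" "0 \<in> W2 i (n + j)" using W2(1)[rule_format, of i "n + j"] Z0[of i j] that by auto
      from small_scale[OF vs scl_cont this] T(1) have "\<exists>U. P i j U" unfolding P_def by auto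
      then show ?thesis unfolding U_def by (rule someI_ex)
    qed
    define W where "W = (\<lambda>i j. W1 i j \<inter> W2 (n + i) (n + j) \<inter> {x. M i j - x \<in> U i j})"
    have Wok: "\<forall>i<n. \<forall>j<n. open (W i j) \<and> M i j \<in> W i j"
    proof (intro allI impI)
      fix i j assume ij: "i < n" "j < n"
      have "open {x. M i j - x \<in> U i j}"
        using open_minus_pre[OF vs add_cont scl_cont] UP[OF ij] unfolding P_def by blast
      then show "open (W i j) \<and> M i j \<in> W i j"
        using W1(1) W2(1) ij UP[OF ij] ZM[OF ij] unfolding W_def P_def
        by (metis (no_types, lifting) IntI add_less_cancel_left diff_self mem_Collect_eq open_Int)
    qed
    have "N \<in> A" if N: "N \<in> mat_carrier n n" "\<forall>i<n. \<forall>j<n. N i j \<in> W i j" for N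
    proof -
      have ND: "N \<in> D n" using W1(2) N unfolding W_def by blast
      have blk: "block_ut n n M (\<lambda>i j. scl (complex_of_real s) (M i j - N i j)) N \<in> D (n + n)"
        if s: "0 \<le> s" "s \<le> T" for s
      proof -
        let ?B = "block_ut n n M (\<lambda>i j. scl (complex_of_real s) (M i j - N i j)) N"
        have "?B \<in> mat_carrier (n+n) (n+n)" by (auto simp: mat_carrier_def block_ut_def)
        moreover have "?B i j \<in> W2 i j" if ij: "i < n + n" "j < n + n" for i j
        proof (cases "i < n")
          case True
          show ?thesis
          proof (cases "j < n")
            case True
            then show ?thesis using W2(1)[rule_format, of i j] ZM(1)[of i j] \<open>i < n\<close> ij by (simp add: block_ut_def)
          next
            case False
            define j' where "j' = j - n"
            have j: "j = n + j'" "j' < n" using False ij by (auto simp: j'_def)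
            have "N i j' \<in> W i j'" using N \<open>i < n\<close> j by auto
            then have "M i j' - N i j' \<in> U i j'" by (auto simp: W_def)
            then have "scl (complex_of_real s) (M i j' - N i j') \<in> W2 i (n + j')"
              using UP[OF \<open>i < n\<close> j(2)] s unfolding P_def by blast
            then show ?thesis using \<open>i < n\<close> j by (auto simp: block_ut_def)
          qed
        next
          case False
          define i' where "i' = i - n"
          have i: "i = n + i'" "i' < n" using False ij by (auto simp: i'_def)
          show ?thesis
          proof (cases "j < n")
            case True
            then show ?thesis using i W2(1)[rule_format, of "n + i'" j] Z0(2)[of j i'] ij by (simp add: block_ut_def)
          next
            case False
            define j' where "j' = j - n"
            have j: "j = n + j'" "j' < n" using False ij by (auto simp: j'_def)
            have "N i' j' \<in> W i' j'" using N i j by auto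
            then show ?thesis using i j by (auto simp: block_ut_def W_def)
          qed
        qed
        ultimately show ?thesis using W2(2) by blast
      qed
      define S where "S = {t :: ennreal. \<forall>s::real. 0 \<le> s \<longrightarrow> ennreal s \<le> t \<longrightarrow>
          block_ut n n M (\<lambda>i j. scl (complex_of_real s) ((\<lambda>i j. M i j - N i j) i j)) N \<in> D (n + n)}"
      have "ennreal T \<in> S" unfolding S_def using blk T(1) by auto
      then have "ennreal T \<le> Sup S" by (rule Sup_upper)
      then have "inverse (Sup S) \<le> inverse (ennreal T)" by (rule ennreal_inv_antimono)
      then have dlt: "nc_delta_tilde scl D n M N < \<epsilon>"
        unfolding nc_delta_tilde_def nc_delta_def S_def[symmetric] using T(2) by simp
      define x where "x = (\<lambda>j::nat. if j = 0 then M else N)"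
      have "(\<Sum>j\<in>{1..1}. nc_delta_tilde scl D n (x (j - 1)) (x j)) \<in>
          {(\<Sum>j\<in>{1..K}. nc_delta_tilde scl D n (x (j - 1)) (x j)) | K (x :: nat \<Rightarrow> 'v ncmat).
            K \<ge> 1 \<and> x 0 = M \<and> x K = N \<and> (\<forall>j\<le>K. x j \<in> D n)}"
        by (rule CollectI, rule exI[of _ 1], rule exI[of _ x]) (auto simp: x_def MD ND)
      then have "nc_dist_tilde scl D n M N \<le> nc_delta_tilde scl D n M N"
        unfolding nc_dist_tilde_def by (auto simp: x_def intro!: Inf_lower2)
      then have "nc_dist_tilde scl D n M N < \<epsilon>" using dlt by simp
      then show ?thesis using eps(2) ND by blast
    qed
    then show ?thesis using Wok by blast
  qed
  then show ?thesis unfolding mat_open_def using AD Dc by blast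
qed

end
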